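(* Let $\lambda>0$. There exists $b_0\in{\rm BMO}_{\triangle_\lambda}(\mathbb R_+)$ such that $[b_0,R_\lambda]$ is not of weak type $(1,1)$ on $(\mathbb R_+,\mu)$, i.e. there is no constant $C$ with $\mu(\{x\in\mathbb R_+:|[b_0,R_\lambda]f(x)|>t\})\le \frac Ct\|f\|_{L^1(\mathbb R_+,\mu)}$ for all $f$ and all $t>0$.
   Context: On $\mathbb R_+=(0,\infty)$, $d\mu(x)=x^{2\lambda}dx$; intervals are $B=(a,b)\subset\mathbb R_+$. ${\rm BMO}_{\triangle_\lambda}(\mathbb R_+)$: $f\in L^1_{loc}(\mu)$ with $\sup_B\frac1{\mu(B)}\int_B|f-f_B|d\mu<\infty$, $f_B=\frac1{\mu(B)}\int_Bf\,d\mu$. $R_\lambda=\frac{d}{dx}\triangle_\lambda^{-1/2}$ is the Bessel Riesz transform associated with $\triangle_\lambda=-\frac{d^2}{dx^2}-\frac{2\lambda}x\frac d{dx}$: $R_\lambda f(x)=\mathrm{p.v.}\int_0^\infty R_\lambda(x,y)f(y)d\mu(y)$, $R_\lambda(x,y)=-\frac{2\lambda}{\pi}\int_0^\pi\frac{(x-y\cos\theta)(\sin\theta)^{2\lambda-1}}{(x^2+y^2-2xy\cos\theta)^{\lambda+1}}d\theta$; $[b,R_\lambda]f=bR_\lambda f-R_\lambda(bf)$. *)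

theory Defs
  imports "HOL-Analysis.Analysis"
begin

definition bessel_mu :: "real \<Rightarrow> real measure" where
  "bessel_mu lam = density (restrict_space lborel {0<..}) (\<lambda>x. ennreal (x powr (2 * lam)))"

definition bessel_avg :: "real \<Rightarrow> (real \<Rightarrow> real) \<Rightarrow> real \<Rightarrow> real \<Rightarrow> real" where
  "bessel_avg lam f a b =
     (1 / measure (bessel_mu lam) {a<..<b}) * (\<integral>y\<in>{a<..<b}. f y \<partial>bessel_mu lam)"

definition BMO_bessel :: "real \<Rightarrow> (real \<Rightarrow> real) \<Rightarrow> bool" where
  "BMO_bessel lam f \<longleftrightarrow>
     f \<in> borel_measurable (bessel_mu lam) \<and>
     (\<forall>a b. 0 \<le> a \<and> a < b \<longrightarrow> set_integrable (bessel_mu lam) {a<..<b} f) \<and>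
     (\<exists>C. \<forall>a b. 0 \<le> a \<and> a < b \<longrightarrow>
        (1 / measure (bessel_mu lam) {a<..<b}) *
          (\<integral>y\<in>{a<..<b}. \<bar>f y - bessel_avg lam f a b\<bar> \<partial>bessel_mu lam) \<le> C)"

definition riesz_kernel :: "real \<Rightarrow> real \<Rightarrow> real \<Rightarrow> real" where
  "riesz_kernel lam x y =
     - (2 * lam / pi) *
       (LBINT \<theta>=0..pi. (x - y * cos \<theta>) * (sin \<theta>) powr (2 * lam - 1)
                         / (x\<^sup>2 + y\<^sup>2 - 2 * x * y * cos \<theta>) powr (lam + 1))"

definition riesz_bessel :: "real \<Rightarrow> (real \<Rightarrow> real) \<Rightarrow> real \<Rightarrow> real" where
  "riesz_bessel lam f x =
     Lim (at_right 0)
       (\<lambda>\<epsilon>. \<integral>y\<in>{y. \<bar>x - y\<bar> > \<epsilon>}. riesz_kernel lam x y * f y \<partial>bessel_mu lam)"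

definition riesz_commutator :: "real \<Rightarrow> (real \<Rightarrow> real) \<Rightarrow> (real \<Rightarrow> real) \<Rightarrow> real \<Rightarrow> real" where
  "riesz_commutator lam b f x = b x * riesz_bessel lam f x - riesz_bessel lam (\<lambda>y. b y * f y) x"

definition bdd_cpt_supp :: "(real \<Rightarrow> real) \<Rightarrow> bool" where
  "bdd_cpt_supp f \<longleftrightarrow> f \<in> borel_measurable borel \<and> (\<exists>M. \<forall>x. \<bar>f x\<bar> \<le> M) \<and>
     (\<exists>a b. 0 < a \<and> a < b \<and> (\<forall>x. x \<notin> {a..b} \<longrightarrow> f x = 0))"

end

theory Submission
  imports Defs
begin


lemma mu_space: "space (bessel_mu lam) = {0<..}"
  by (simp add: bessel_mu_def space_restrict_space)

lemma mu_sets: "sets (bessel_mu lam) = sets (restrict_space lborel {0<..})"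
  by (simp add: bessel_mu_def)

lemma mu_meas: "h \<in> borel_measurable borel \<Longrightarrow> h \<in> borel_measurable (bessel_mu lam)"
  unfolding bessel_mu_def
  by (subst measurable_cong_sets[OF sets_density refl]) (auto intro!: measurable_restrict_space1)

lemma mu_nn:
  fixes g :: "real \<Rightarrow> ennreal"
  assumes [measurable]: "g \<in> borel_measurable borel"
  shows "(\<integral>\<^sup>+ x. g x \<partial>bessel_mu lam) = (\<integral>\<^sup>+ x. ennreal (x powr (2*lam)) * g x * indicator {0<..} x \<partial>lborel)"
  unfolding bessel_mu_def
  apply (subst nn_integral_density)
    apply (auto intro!: measurable_restrict_space1)
  apply (subst nn_integral_restrict_space)
  apply auto
  done

lemma mu_em:
  assumes A: "A \<in> sets borel" "A \<subseteq> {0<..}"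
  shows "emeasure (bessel_mu lam) A = (\<integral>\<^sup>+ x. ennreal (x powr (2*lam)) * indicator A x \<partial>lborel)"
proof -
  have As: "A \<in> sets (bessel_mu lam)" using A
    by (auto simp: mu_sets sets_restrict_space_iff)
  have "emeasure (bessel_mu lam) A = (\<integral>\<^sup>+ x. indicator A x \<partial>bessel_mu lam)"
    using As by simp
  also have "\<dots> = (\<integral>\<^sup>+ x. ennreal (x powr (2*lam)) * indicator A x * indicator {0<..} x \<partial>lborel)"
    using A by (intro mu_nn) auto
  also have "\<dots> = (\<integral>\<^sup>+ x. ennreal (x powr (2*lam)) * indicator A x \<partial>lborel)"
    using A by (intro nn_integral_cong) (auto split: split_indicator)
  finally show ?thesis .
qed

lemma mu_em_lower:
  assumes A: "A \<in> sets borel" "A \<subseteq> {0<..}" and c: "\<And>x. x \<in> A \<Longrightarrow> c \<le> x powr (2*lam)" "0 \<le> c"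
  shows "ennreal c * emeasure lborel A \<le> emeasure (bessel_mu lam) A"
proof -
  have "ennreal c * emeasure lborel A = (\<integral>\<^sup>+ x. ennreal c * indicator A x \<partial>lborel)"
    using A by (simp add: nn_integral_cmult_indicator)
  also have "\<dots> \<le> (\<integral>\<^sup>+ x. ennreal (x powr (2*lam)) * indicator A x \<partial>lborel)"
    using c by (intro nn_integral_mono) (auto split: split_indicator intro!: ennreal_leI)
  finally show ?thesis using mu_em[OF A] by simp
qed

lemma mu_em_upper:
  assumes A: "A \<in> sets borel" "A \<subseteq> {0<..}" and c: "\<And>x. x \<in> A \<Longrightarrow> x powr (2*lam) \<le> c"
  shows "emeasure (bessel_mu lam) A \<le> ennreal c * emeasure lborel A"
proof -
  have "(\<integral>\<^sup>+ x. ennreal (x powr (2*lam)) * indicator A x \<partial>lborel) \<le> (\<integral>\<^sup>+ x. ennreal c * indicator A x \<partial>lborel)"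
    using c by (intro nn_integral_mono) (auto split: split_indicator intro!: ennreal_leI)
  also have "\<dots> = ennreal c * emeasure lborel A"
    using A by (simp add: nn_integral_cmult_indicator)
  finally show ?thesis using mu_em[OF A] by simp
qed



lemma sin_ge_half_x: fixes x :: real assumes "0 \<le> x" "x \<le> 1" shows "x / 2 \<le> sin x"
proof -
  have d: "\<And>t::real. 0 \<le> t \<Longrightarrow> t \<le> 1 \<Longrightarrow> 0 \<le> cos t - 1/2"
  proof -
    fix t :: real assume t: "0 \<le> t" "t \<le> 1"
    have "pi / 3 \<ge> 1" using pi_gt3 by linarith
    then have "cos (pi/3) \<le> cos t" using t pi_gt3 cos_monotone_0_pi_le[of t "pi/3"] by linarith
    then show "0 \<le> cos t - 1/2" using cos_60 by linarith
  qed
  have "(\<lambda>t. sin t - t/2) 0 \<le> (\<lambda>t. sin t - t/2) x"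
    apply (rule DERIV_nonneg_imp_nondecreasing[of 0 x])
    using assms apply simp
    apply (rule exI[of _ "cos _ - 1/2"])
    apply (auto intro!: derivative_eq_intros)
    using d assms by fastforce
  then show ?thesis by simp
qed

lemma sin_lower: fixes x :: real assumes "0 \<le> x" "x \<le> pi" shows "min x (min (pi - x) 1) / 2 \<le> sin x"
proof -
  have s1: "1/2 \<le> sin (1::real)" using sin_ge_half_x[of "1::real"] by simp
  have p: "pi > 3" by (rule pi_gt3)
  consider "x \<le> 1" | "pi - x \<le> 1" | "1 \<le> x" "x \<le> pi/2" | "pi/2 \<le> x" "x \<le> pi - 1" using p by linarith
  then show ?thesis
  proof cases
    case 1 then show ?thesis using sin_ge_half_x[of x] assms by auto
  next
    case 2 then have "(pi - x)/2 \<le> sin (pi - x)" using sin_ge_half_x[of "pi - x"] assms by auto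
    then show ?thesis by (simp add: sin_diff)
  next
    case 3 then have "sin 1 \<le> sin x" using p by (intro sin_monotone_2pi_le) auto
    moreover have "min x (min (pi - x) 1) / 2 \<le> 1/2" by simp
    ultimately show ?thesis using s1 by linarith
  next
    case 4 then have "sin 1 \<le> sin (pi - x)" using p by (intro sin_monotone_2pi_le) auto
    moreover have "min x (min (pi - x) 1) / 2 \<le> 1/2" by simp
    ultimately show ?thesis using s1 by (simp add: sin_diff)
  qed
qed



lemma powr_int0:
  fixes q :: real assumes q: "q > -1"
  shows "integrable lborel (\<lambda>t. indicator {0..pi} t * t powr q)"
proof -
  have "(\<lambda>x. x powr q) integrable_on {0..pi}"
    using q by (intro integrable_on_powr_from_0) auto
  then have "(\<lambda>x. x powr q) absolutely_integrable_on {0..pi}"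
    by (rule nonnegative_absolutely_integrable_1) auto
  then have "integrable lebesgue (\<lambda>t. indicator {0..pi} t *\<^sub>R t powr q)"
    by (simp add: set_integrable_def)
  then have "integrable lborel (\<lambda>t. indicator {0..pi} t *\<^sub>R t powr q)"
    by (subst (asm) integrable_completion) auto
  then show ?thesis by simp
qed

lemma powr_int1:
  fixes q :: real assumes q: "q > -1"
  shows "integrable lborel (\<lambda>t. indicator {0..pi} t * (pi - t) powr q)"
proof -
  have "integrable lborel (\<lambda>t. (\<lambda>t. indicator {0..pi} t * t powr q) (pi + (-1) * t))"
    using powr_int0[OF q] by (subst lborel_integrable_real_affine_iff) auto
  moreover have "(\<lambda>t. (\<lambda>t. indicator {0..pi} t * t powr q) (pi + (-1) * t)) = (\<lambda>t. indicator {0..pi} t * (pi - t) powr q)"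
    by (auto simp: fun_eq_iff split: split_indicator)
  ultimately show ?thesis by simp
qed

lemma sinpow_bound:
  fixes q t :: real assumes q: "q > -1" and t: "0 \<le> t" "t \<le> pi"
  shows "sin t powr q \<le> (1 + 2 powr (-q)) * (1 + t powr q + (pi - t) powr q)"
proof -
  have R: "1 \<le> (1 + 2 powr (-q)) * (1 + t powr q + (pi - t) powr q)"
  proof -
    have "1 \<le> 1 + t powr q + (pi - t) powr q" by simp
    moreover have "1 \<le> 1 + 2 powr (-q)" by simp
    ultimately show ?thesis by (metis mult_mono mult_1 order_trans zero_le_one)
  qed
  show ?thesis
  proof (cases "sin t = 0")
    case True then show ?thesis using R by simp
  next
    case False
    then have sp: "0 < sin t" using sin_ge_zero[OF t] by simp
    have "t \<noteq> 0" "t \<noteq> pi" using False by auto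
    then have tt: "0 < t" "t < pi" using t by auto
    show ?thesis
    proof (cases "q \<ge> 0")
      case True
      then have "sin t powr q \<le> 1 powr q" using sp by (intro powr_mono2) auto
      then show ?thesis using R by simp
    next
      case False
      define m where "m = min t (min (pi - t) 1)"
      have m0: "0 < m" using tt by (simp add: m_def)
      have ms: "m / 2 \<le> sin t" using sin_lower[OF t] by (simp add: m_def)
      have a1: "sin t powr q \<le> (m/2) powr q" using False m0 ms by (intro powr_mono2') auto
      have mm: "(m/2) powr q = m powr q * 2 powr (-q)" using m0 by (simp add: powr_divide powr_minus_divide)
      have "m = t \<or> m = pi - t \<or> m = 1" unfolding m_def by linarith
      then have "m powr q \<le> 1 + t powr q + (pi - t) powr q"
        by (elim disjE) (simp_all add: add_increasing add_increasing2)
      then have a2: "m powr q * 2 powr (-q) \<le> (1 + t powr q + (pi - t) powr q) * 2 powr (-q)"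
        by (intro mult_right_mono) auto
      have a3: "(1 + t powr q + (pi - t) powr q) * 2 powr (-q) \<le> (1 + 2 powr (-q)) * (1 + t powr q + (pi - t) powr q)"
        by (simp add: algebra_simps)
      show ?thesis using a1 a2 a3 mm by linarith
    qed
  qed
qed

lemma sinpow_int:
  fixes q :: real assumes q: "q > -1"
  shows "integrable lborel (\<lambda>t. indicator {0..pi} t * sin t powr q)"
proof (rule Bochner_Integration.integrable_bound)
  show "integrable lborel (\<lambda>t. (1 + 2 powr (-q)) * (indicator {0..pi} t + indicator {0..pi} t * t powr q + indicator {0..pi} t * (pi - t) powr q))"
    using powr_int0[OF q] powr_int1[OF q]
    by (intro integrable_mult_right Bochner_Integration.integrable_add) auto
  show "(\<lambda>t. indicator {0..pi} t * sin t powr q) \<in> borel_measurable lborel" by measurable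
  show "AE x in lborel. norm (indicator {0..pi} x * sin x powr q) \<le> norm ((1 + 2 powr (-q)) * (indicator {0..pi} x + indicator {0..pi} x * x powr q + indicator {0..pi} x * (pi - x) powr q))"
  proof (rule AE_I2)
    fix x :: real
    show "norm (indicator {0..pi} x * sin x powr q) \<le> norm ((1 + 2 powr (-q)) * (indicator {0..pi} x + indicator {0..pi} x * x powr q + indicator {0..pi} x * (pi - x) powr q))"
    proof (cases "x \<in> {0..pi}")
      case True
      then show ?thesis using sinpow_bound[OF q, of x] by (simp add: algebra_simps)
    qed simp
  qed
qed

lemma sinpow_pos:
  fixes q :: real assumes q: "q > -1"
  shows "min 1 ((1/2) powr q) \<le> (\<integral>t. indicator {0..pi} t * sin t powr q \<partial>lborel)"
proof -
  have "(\<integral>t. indicator {1..2::real} t * min 1 ((1/2) powr q) \<partial>lborel) \<le> (\<integral>t. indicator {0..pi} t * sin t powr q \<partial>lborel)"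
  proof (rule integral_mono)
    show "integrable lborel (\<lambda>t. indicator {1..2::real} t * min 1 ((1/2) powr q))" by simp
    show "integrable lborel (\<lambda>t. indicator {0..pi} t * sin t powr q)" by (rule sinpow_int[OF q])
    fix t :: real
    show "indicator {1..2::real} t * min 1 ((1/2) powr q) \<le> indicator {0..pi} t * sin t powr q"
    proof (cases "t \<in> {1..2}")
      case True
      have p: "pi > 3" by (rule pi_gt3)
      have "min t (min (pi - t) 1) / 2 \<le> sin t" using True p by (intro sin_lower) auto
      moreover have "min t (min (pi - t) 1) = 1" using True p by auto
      ultimately have s: "1/2 \<le> sin t" by simp
      have "min 1 ((1/2) powr q) \<le> sin t powr q"
      proof (cases "q \<ge> 0")
        case True
        then have "(1/2) powr q \<le> sin t powr q" using s by (intro powr_mono2) auto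
        then show ?thesis by linarith
      next
        case False
        have "sin t \<le> 1" by simp
        then have "1 powr q \<le> sin t powr q" using False s by (intro powr_mono2') auto
        then show ?thesis by simp
      qed
      then show ?thesis using True p by auto
    qed (auto intro: mult_nonneg_nonneg split: split_indicator)
  qed
  then show ?thesis by simp
qed



definition KF :: "real \<Rightarrow> real \<Rightarrow> real \<Rightarrow> real \<Rightarrow> real" where
  "KF lam x y t = indicator {0..pi} t * ((x - y * cos t) * (sin t) powr (2 * lam - 1)
                         / (x\<^sup>2 + y\<^sup>2 - 2 * x * y * cos t) powr (lam + 1))"

lemma kernel_eq: "riesz_kernel lam x y = - (2 * lam / pi) * (\<integral>t. KF lam x y t \<partial>lborel)"
proof -
  have e: "\<And>f. interval_lebesgue_integral lborel 0 (ereal pi) f = (\<integral>t. indicator {0..pi} t *\<^sub>R f t \<partial>lborel)"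
    using interval_integral_Icc[of 0 pi] by (simp add: set_lebesgue_integral_def zero_ereal_def)
  show ?thesis unfolding riesz_kernel_def KF_def e by simp
qed

lemma kernel_meas: "(\<lambda>y. riesz_kernel lam x y) \<in> borel_measurable borel"
  unfolding kernel_eq KF_def by measurable

lemma F_bounds:
  fixes x y t :: real
  assumes lam: "0 < lam" and x: "4 \<le> x" and y: "1 \<le> y" "y \<le> 2"
  shows "(x/2) * (sin t powr (2*lam-1)) / ((3*x/2)\<^sup>2 powr (lam+1))
           \<le> (x - y * cos t) * (sin t) powr (2 * lam - 1) / (x\<^sup>2 + y\<^sup>2 - 2 * x * y * cos t) powr (lam + 1)"
    and "(x - y * cos t) * (sin t) powr (2 * lam - 1) / (x\<^sup>2 + y\<^sup>2 - 2 * x * y * cos t) powr (lam + 1)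
           \<le> (3*x/2) * (sin t powr (2*lam-1)) / ((x/2)\<^sup>2 powr (lam+1))"
proof -
  let ?s = "sin t powr (2*lam-1)"
  let ?D = "x\<^sup>2 + y\<^sup>2 - 2 * x * y * cos t"
  have c: "-1 \<le> cos t" "cos t \<le> 1" by auto
  have yc: "- y \<le> y * cos t" "y * cos t \<le> y" using c y
    by (metis mult.right_neutral mult_left_mono mult_minus_right order_trans zero_le_one,
        metis mult.right_neutral mult_left_mono order_trans zero_le_one)
  have N1: "x/2 \<le> x - y * cos t" using yc x y by linarith
  have N2: "x - y * cos t \<le> 3*x/2" using yc x y by linarith
  have "?D - (x - y)\<^sup>2 = 2 * x * y * (1 - cos t)" by (simp add: power2_eq_square algebra_simps)
  moreover have "0 \<le> 1 - cos t" using c by linarith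
  then have "0 \<le> 2 * x * y * (1 - cos t)" using x y by (intro mult_nonneg_nonneg) auto
  moreover have "(x/2)\<^sup>2 \<le> (x - y)\<^sup>2" using x y by (intro power_mono) auto
  ultimately have D1: "(x/2)\<^sup>2 \<le> ?D" by linarith
  have "(x + y)\<^sup>2 - ?D = 2 * x * y * (1 + cos t)" by (simp add: power2_eq_square algebra_simps)
  moreover have "0 \<le> 1 + cos t" using c by linarith
  then have "0 \<le> 2 * x * y * (1 + cos t)" using x y by (intro mult_nonneg_nonneg) auto
  moreover have "(x + y)\<^sup>2 \<le> (3*x/2)\<^sup>2" using x y by (intro power_mono) auto
  ultimately have D2: "?D \<le> (3*x/2)\<^sup>2" by linarith
  have xp: "0 < (x/2)\<^sup>2" using x by simp
  have P1: "(x/2)\<^sup>2 powr (lam+1) \<le> ?D powr (lam+1)" using D1 xp lam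
    by (intro powr_mono2) auto
  have D0: "0 \<le> ?D" using D1 xp by linarith
  have P2: "?D powr (lam+1) \<le> (3*x/2)\<^sup>2 powr (lam+1)" using D0 D2 lam
    by (intro powr_mono2) auto
  have P0: "0 < (x/2)\<^sup>2 powr (lam+1)" using xp by simp
  have s0: "0 \<le> ?s" by simp
  show "(x/2) * ?s / ((3*x/2)\<^sup>2 powr (lam+1)) \<le> (x - y * cos t) * ?s / ?D powr (lam + 1)"
    by (rule frac_le) (use mult_right_mono[OF N1 s0] N1 P0 P1 P2 s0 x in \<open>auto\<close>)
  show "(x - y * cos t) * ?s / ?D powr (lam + 1) \<le> (3*x/2) * ?s / ((x/2)\<^sup>2 powr (lam+1))"
    by (rule frac_le) (use mult_right_mono[OF N2 s0] N2 P0 P1 P2 s0 x in \<open>auto\<close>)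
qed



definition SS :: "real \<Rightarrow> real" where
  "SS lam = (\<integral>t. indicator {0..pi} t * sin t powr (2*lam-1) \<partial>lborel)"
definition LB :: "real \<Rightarrow> real \<Rightarrow> real" where
  "LB lam x = (x/2) / ((3*x/2)\<^sup>2 powr (lam+1))"
definition UB :: "real \<Rightarrow> real \<Rightarrow> real" where
  "UB lam x = (3*x/2) / ((x/2)\<^sup>2 powr (lam+1))"

lemma SS_pos: "0 < lam \<Longrightarrow> 0 < SS lam"
proof -
  assume l: "0 < lam"
  have "min 1 ((1/2) powr (2*lam-1)) \<le> SS lam" unfolding SS_def using l by (intro sinpow_pos) auto
  moreover have "0 < min 1 ((1/2) powr (2*lam-1))" by simp
  ultimately show ?thesis by linarith
qed

lemma KF_pt:
  assumes lam: "0 < lam" and x: "4 \<le> x" and y: "1 \<le> y" "y \<le> 2"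
  shows "LB lam x * (indicator {0..pi} t * sin t powr (2*lam-1)) \<le> KF lam x y t"
    and "KF lam x y t \<le> UB lam x * (indicator {0..pi} t * sin t powr (2*lam-1))"
  using F_bounds[OF lam x y, of t]
  by (auto simp: KF_def LB_def UB_def split: split_indicator)

lemma LB_pos: "4 \<le> x \<Longrightarrow> 0 < LB lam x" by (simp add: LB_def)

lemma KF_int:
  assumes lam: "0 < lam" and x: "4 \<le> x" and y: "1 \<le> y" "y \<le> 2"
  shows "integrable lborel (KF lam x y)"
    and "LB lam x * SS lam \<le> (\<integral>t. KF lam x y t \<partial>lborel)"
    and "(\<integral>t. KF lam x y t \<partial>lborel) \<le> UB lam x * SS lam"
proof -
  have si: "integrable lborel (\<lambda>t. indicator {0..pi} t * sin t powr (2*lam-1))"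
    using lam by (intro sinpow_int) auto
  show I: "integrable lborel (KF lam x y)"
  proof (rule Bochner_Integration.integrable_bound)
    show "integrable lborel (\<lambda>t. UB lam x * (indicator {0..pi} t * sin t powr (2*lam-1)))"
      using si by simp
    show "KF lam x y \<in> borel_measurable lborel" unfolding KF_def by measurable
    show "AE t in lborel. norm (KF lam x y t) \<le> norm (UB lam x * (indicator {0..pi} t * sin t powr (2*lam-1)))"
    proof (rule AE_I2)
      fix t
      have a: "0 \<le> KF lam x y t"
        using KF_pt(1)[OF lam x y, of t] LB_pos[OF x, of lam] 
        by (smt (verit) indicator_pos_le mult_nonneg_nonneg powr_ge_zero)
      show "norm (KF lam x y t) \<le> norm (UB lam x * (indicator {0..pi} t * sin t powr (2*lam-1)))"
        using a KF_pt(2)[OF lam x y, of t] by simp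
    qed
  qed
  show "LB lam x * SS lam \<le> (\<integral>t. KF lam x y t \<partial>lborel)"
    unfolding SS_def
    using integral_mono[OF integrable_mult_right[OF si] I KF_pt(1)[OF lam x y] ] by simp
  show "(\<integral>t. KF lam x y t \<partial>lborel) \<le> UB lam x * SS lam"
    unfolding SS_def
    using integral_mono[OF I integrable_mult_right[OF si] KF_pt(2)[OF lam x y] ] by simp
qed

lemma kern_lower:
  assumes lam: "0 < lam" and x: "4 \<le> x" and y: "1 \<le> y" "y \<le> 2"
  shows "(2*lam/pi) * LB lam x * SS lam \<le> - riesz_kernel lam x y"
proof -
  have "(2*lam/pi) * (LB lam x * SS lam) \<le> (2*lam/pi) * (\<integral>t. KF lam x y t \<partial>lborel)"
    using KF_int(2)[OF lam x y] lam by (intro mult_left_mono) auto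
  then show ?thesis unfolding kernel_eq by (simp add: mult.assoc)
qed

lemma kern_abs:
  assumes lam: "0 < lam" and x: "4 \<le> x" and y: "1 \<le> y" "y \<le> 2"
  shows "\<bar>riesz_kernel lam x y\<bar> \<le> (2*lam/pi) * UB lam x * SS lam"
proof -
  have "0 \<le> (\<integral>t. KF lam x y t \<partial>lborel)"
    using KF_int(2)[OF lam x y] LB_pos[OF x, of lam] SS_pos[OF lam]
    by (smt (verit) mult_pos_pos)
  then have "\<bar>riesz_kernel lam x y\<bar> = (2*lam/pi) * (\<integral>t. KF lam x y t \<partial>lborel)"
    unfolding kernel_eq using lam by (simp add: abs_mult)
  also have "\<dots> \<le> (2*lam/pi) * (UB lam x * SS lam)"
    using KF_int(3)[OF lam x y] lam by (intro mult_left_mono) auto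
  finally show ?thesis by (simp add: mult.assoc)
qed



lemma mu_12_sets: "{1..2::real} \<in> sets (bessel_mu lam)"
  by (auto simp: mu_sets sets_restrict_space_iff)

lemma mu_12_fin: assumes lam: "0 < lam" shows "emeasure (bessel_mu lam) {1..2::real} < \<infinity>"
proof -
  have "emeasure (bessel_mu lam) {1..2::real} \<le> ennreal (2 powr (2*lam)) * emeasure lborel {1..2::real}"
    by (rule mu_em_upper) (use lam in \<open>auto intro!: powr_mono2\<close>)
  also have "\<dots> < \<infinity>" by (simp add: ennreal_mult_less_top)
  finally show ?thesis .
qed

lemma mu_12_pos: assumes lam: "0 < lam" shows "0 < measure (bessel_mu lam) {1..2::real}"
proof -
  have "ennreal 1 * emeasure lborel {1..2::real} \<le> emeasure (bessel_mu lam) {1..2::real}"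
    by (rule mu_em_lower) (use lam in \<open>auto intro!: ge_one_powr_ge_zero\<close>)
  then have "1 \<le> emeasure (bessel_mu lam) {1..2::real}" by simp
  then have "0 < emeasure (bessel_mu lam) {1..2::real}" by (rule order.strict_trans2[OF zero_less_one])
  then show ?thesis using mu_12_fin[OF lam]
    by (simp add: measure_def enn2real_positive_iff)
qed

lemma int12:
  fixes h :: "real \<Rightarrow> real" and c :: real
  assumes lam: "0 < lam" and h: "h \<in> borel_measurable borel" and b: "\<And>y. \<bar>h y\<bar> \<le> c * indicator {1..2::real} y"
  shows "integrable (bessel_mu lam) h"
proof (rule Bochner_Integration.integrable_bound)
  show "integrable (bessel_mu lam) (\<lambda>y. c * indicator {1..2::real} y)"
    using mu_12_fin[OF lam] mu_12_sets[of lam]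
    by (intro integrable_mult_right) (simp add: integrable_indicator_iff mu_space Int_absorb2 subset_eq)
  show "h \<in> borel_measurable (bessel_mu lam)" by (rule mu_meas[OF h])
  show "AE y in bessel_mu lam. norm (h y) \<le> norm (c * indicator {1..2::real} y)"
  proof (rule AE_I2)
    fix y
    have "\<bar>h y\<bar> \<le> \<bar>c * indicator {1..2::real} y\<bar>" using b[of y] abs_ge_self order_trans by blast
    then show "norm (h y) \<le> norm (c * indicator {1..2::real} y)" by simp
  qed
qed

lemma R_eval:
  assumes h0: "\<And>y. y \<notin> {1..2} \<Longrightarrow> h y = 0" and x: "3 \<le> x"
  shows "riesz_bessel lam h x = (\<integral>y. riesz_kernel lam x y * h y \<partial>bessel_mu lam)"
proof -
  have ev: "eventually (\<lambda>\<epsilon>. (\<integral>y\<in>{y. \<bar>x - y\<bar> > \<epsilon>}. riesz_kernel lam x y * h y \<partial>bessel_mu lam)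
      = (\<integral>y. riesz_kernel lam x y * h y \<partial>bessel_mu lam)) (at_right 0)"
    unfolding eventually_at_right_field
  proof (intro exI[of _ 1] conjI allI impI)
    fix e :: real assume e: "0 < e" "e < 1"
    show "(\<integral>y\<in>{y. \<bar>x - y\<bar> > e}. riesz_kernel lam x y * h y \<partial>bessel_mu lam)
      = (\<integral>y. riesz_kernel lam x y * h y \<partial>bessel_mu lam)"
      unfolding set_lebesgue_integral_def
    proof (rule Bochner_Integration.integral_cong[OF refl])
      fix y
      show "indicator {y. \<bar>x - y\<bar> > e} y *\<^sub>R (riesz_kernel lam x y * h y) = riesz_kernel lam x y * h y"
      proof (cases "y \<in> {1..2}")
        case True then have "\<bar>x - y\<bar> > e" using x e by auto
        then show ?thesis by simp
      next
        case False then show ?thesis using h0 by simp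
      qed
    qed
  qed simp
  show ?thesis unfolding riesz_bessel_def
    by (rule tendsto_Lim) (auto intro: tendsto_eventually[OF ev])
qed

definition bz :: "real \<Rightarrow> real" where "bz x = ln (max 1 (x/3))"

lemma b0_meas[measurable]: "bz \<in> borel_measurable borel"
  unfolding bz_def by measurable

lemma comm_lower:
  assumes lam: "0 < lam" and x: "4 \<le> x"
  shows "(2*lam/pi) * LB lam x * SS lam * (ln x - ln 3) * measure (bessel_mu lam) {1..2::real}
           \<le> \<bar>riesz_commutator lam bz (indicator {1..2::real}) x\<bar>"
proof -
  let ?f = "indicator {1..2::real} :: real \<Rightarrow> real"
  let ?K = "\<lambda>y. riesz_kernel lam x y"
  let ?M = "(2*lam/pi) * UB lam x * SS lam"
  let ?A = "(2*lam/pi) * LB lam x * SS lam * (ln x - ln 3)"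
  have Km[measurable]: "?K \<in> borel_measurable borel" by (rule kernel_meas)
  have Kb: "\<And>y. y \<in> {1..2} \<Longrightarrow> \<bar>?K y\<bar> \<le> ?M" using kern_abs[OF lam x] by auto
  have b0b: "\<And>y. y \<in> {1..2} \<Longrightarrow> bz y = 0" by (simp add: bz_def)
  have bx: "bz x = ln x - ln 3" using x by (simp add: bz_def ln_div)
  have i1: "integrable (bessel_mu lam) (\<lambda>y. ?K y * ?f y)"
    by (rule int12[OF lam, where c="?M"]) (use Kb in \<open>auto split: split_indicator simp: abs_mult\<close>)
  have i2: "integrable (bessel_mu lam) (\<lambda>y. ?K y * (bz y * ?f y))"
  proof (rule int12[OF lam, where c="?M * ln 2"])
    show "(\<lambda>y. ?K y * (bz y * ?f y)) \<in> borel_measurable borel" by measurable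
    fix y :: real
    show "\<bar>?K y * (bz y * ?f y)\<bar> \<le> ?M * ln 2 * ?f y"
    proof (cases "y \<in> {1..2}")
      case True
      have "\<bar>bz y\<bar> \<le> ln 2" using True by (simp add: b0b del: ln_le_zero_iff)
      then have "\<bar>?K y\<bar> * \<bar>bz y\<bar> \<le> ?M * ln 2"
        using Kb[OF True] by (intro mult_mono) auto
      then show ?thesis using True by (simp add: abs_mult)
    qed simp
  qed
  have R1: "riesz_bessel lam ?f x = (\<integral>y. ?K y * ?f y \<partial>bessel_mu lam)"
    by (rule R_eval) (use x in auto)
  have R2: "riesz_bessel lam (\<lambda>y. bz y * ?f y) x = (\<integral>y. ?K y * (bz y * ?f y) \<partial>bessel_mu lam)"
    by (rule R_eval) (use x in auto)
  have C: "riesz_commutator lam bz ?f x = (\<integral>y. bz x * (?K y * ?f y) - ?K y * (bz y * ?f y) \<partial>bessel_mu lam)"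
    unfolding riesz_commutator_def R1 R2
    using i1 i2 by (simp add: Bochner_Integration.integral_diff)
  have "(\<integral>y. ?A * ?f y \<partial>bessel_mu lam) \<le> (\<integral>y. - (bz x * (?K y * ?f y) - ?K y * (bz y * ?f y)) \<partial>bessel_mu lam)"
  proof (rule integral_mono)
    show "integrable (bessel_mu lam) (\<lambda>y. ?A * ?f y)"
      using mu_12_fin[OF lam] mu_12_sets[of lam]
      by (intro integrable_mult_right) (simp add: integrable_indicator_iff mu_space Int_absorb2 subset_eq)
    show "integrable (bessel_mu lam) (\<lambda>y. - (bz x * (?K y * ?f y) - ?K y * (bz y * ?f y)))"
      using i1 i2 by auto
    fix y :: real
    show "?A * ?f y \<le> - (bz x * (?K y * ?f y) - ?K y * (bz y * ?f y))"
    proof (cases "y \<in> {1..2}")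
      case True
      have k: "(2*lam/pi) * LB lam x * SS lam \<le> - ?K y" using kern_lower[OF lam x] True by auto
      have k0: "0 \<le> (2*lam/pi) * LB lam x * SS lam" using lam LB_pos[OF x, of lam] SS_pos[OF lam] by simp
      have l: "ln x - ln 3 \<le> bz x - bz y" using True x by (simp add: b0b bx)
      have l0: "0 \<le> ln x - ln 3" using x by simp
      have "?A \<le> (- ?K y) * (bz x - bz y)" using mult_mono[OF k l order_trans[OF k0 k] l0] by simp
      then show ?thesis using True by (simp add: algebra_simps)
    qed simp
  qed
  also have "\<dots> = - riesz_commutator lam bz ?f x" unfolding C by (rule Bochner_Integration.integral_minus)
  finally have "?A * measure (bessel_mu lam) {1..2} \<le> - riesz_commutator lam bz ?f x"
    using mu_12_fin[OF lam] mu_12_sets[of lam] by simp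
  then show ?thesis by simp
qed



lemma mu_int:
  fixes g :: "real \<Rightarrow> real"
  assumes [measurable]: "g \<in> borel_measurable borel"
  shows "(\<integral>y. g y \<partial>bessel_mu lam) = (\<integral>y. indicator {0<..} y * (y powr (2*lam) * g y) \<partial>lborel)"
  unfolding bessel_mu_def
  apply (subst integral_density)
  apply (auto intro!: measurable_restrict_space1)
  apply (subst integral_restrict_space)
  apply auto
  done

lemma kernel_meas2[measurable]: "(\<lambda>(x, y). riesz_kernel lam x y) \<in> borel_measurable (borel \<Otimes>\<^sub>M borel)"
  unfolding kernel_eq KF_def by measurable

lemma kint_meas:
  assumes [measurable]: "h \<in> borel_measurable borel"
  shows "(\<lambda>x. \<integral>y. riesz_kernel lam x y * h y \<partial>bessel_mu lam) \<in> borel_measurable borel"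
  by (subst mu_int) measurable

lemma comm_zero:
  assumes "x \<le> 3"
  shows "riesz_commutator lam bz (indicator {1..2::real}) x = 0"
proof -
  have bx: "bz x = 0" using assms by (simp add: bz_def)
  have z: "(\<lambda>y. bz y * indicator {1..2::real} y) = (\<lambda>y. 0)"
    by (auto simp: fun_eq_iff bz_def split: split_indicator)
  have "riesz_bessel lam (\<lambda>y. 0) x = 0"
    unfolding riesz_bessel_def by (rule tendsto_Lim) auto
  then show ?thesis unfolding riesz_commutator_def bx z by simp
qed

lemma comm_eq:
  assumes "3 \<le> x"
  shows "riesz_commutator lam bz (indicator {1..2::real}) x =
     bz x * (\<integral>y. riesz_kernel lam x y * indicator {1..2::real} y \<partial>bessel_mu lam)
     - (\<integral>y. riesz_kernel lam x y * (bz y * indicator {1..2::real} y) \<partial>bessel_mu lam)"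
  unfolding riesz_commutator_def
  by (subst R_eval[where h="indicator {1..2}"], use assms in auto)
     (subst R_eval, use assms in auto)

lemma level_meas:
  "{x\<in>{0<..}. t < \<bar>riesz_commutator lam bz (indicator {1..2::real}) x\<bar>} \<in> sets (bessel_mu lam)" if "0 < t"
proof -
  define G where "G x = bz x * (\<integral>y. riesz_kernel lam x y * indicator {1..2::real} y \<partial>bessel_mu lam)
     - (\<integral>y. riesz_kernel lam x y * (bz y * indicator {1..2::real} y) \<partial>bessel_mu lam)" for x
  have [measurable]: "G \<in> borel_measurable borel" unfolding G_def
    by (intro borel_measurable_diff borel_measurable_times b0_meas kint_meas) measurable
  have "{x\<in>{0<..}. t < \<bar>riesz_commutator lam bz (indicator {1..2::real}) x\<bar>} = {x. 3 < x \<and> t < \<bar>G x\<bar>}"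
  proof (rule set_eqI)
    fix x :: real
    show "x \<in> {x\<in>{0<..}. t < \<bar>riesz_commutator lam bz (indicator {1..2::real}) x\<bar>} \<longleftrightarrow> x \<in> {x. 3 < x \<and> t < \<bar>G x\<bar>}"
    proof (cases "x \<le> 3")
      case True then show ?thesis using comm_zero[OF True, of lam] that by auto
    next
      case False then show ?thesis using comm_eq[of x lam] unfolding G_def by auto
    qed
  qed
  also have "\<dots> \<in> sets borel" by measurable
  finally have "{x\<in>{0<..}. t < \<bar>riesz_commutator lam bz (indicator {1..2::real}) x\<bar>} \<in> sets borel" .
  then show ?thesis by (auto simp: mu_sets sets_restrict_space_iff)
qed



lemma c1_id:
  fixes Z :: real
  assumes Z: "0 < Z"
  shows "(Z/2) / ((3*Z)\<^sup>2 powr (lam+1)) * (Z powr (2*lam) * Z) = 1 / (2 * 3 powr (2*lam+2))"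
proof -
  have "(3*Z)\<^sup>2 = (3*Z) powr 2" using Z by (simp add: powr_numeral)
  moreover have h2: "((3*Z) powr 2) powr (lam+1) = (3*Z) powr (2*lam+2)"
    using powr_powr[of "3*Z" 2 "lam+1"] by (simp add: algebra_simps)
  ultimately have "(3*Z)\<^sup>2 powr (lam+1) = (3*Z) powr (2*lam+2)" by (simp only:)
  also have "\<dots> = 3 powr (2*lam+2) * (Z powr (2*lam) * Z\<^sup>2)" using Z
    by (simp add: powr_mult powr_add powr_numeral)
  finally have e: "(3*Z)\<^sup>2 powr (lam+1) = 3 powr (2*lam+2) * (Z powr (2*lam) * Z\<^sup>2)" .
  have p: "0 < Z powr (2*lam)" "0 < 3 powr (2*lam+2)" using Z by auto
  show ?thesis unfolding e using Z p by (simp add: field_simps power2_eq_square)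
qed

lemma not_weak:
  assumes lam: "0 < lam"
  shows "\<not> (\<exists>C. \<forall>f t. bdd_cpt_supp f \<longrightarrow> t > 0 \<longrightarrow>
          emeasure (bessel_mu lam) {x\<in>{0<..}. \<bar>riesz_commutator lam bz f x\<bar> > t}
            \<le> ennreal (C / t * (\<integral>x. \<bar>f x\<bar> \<partial>bessel_mu lam)))"
proof
  assume "\<exists>C. \<forall>f t. bdd_cpt_supp f \<longrightarrow> t > 0 \<longrightarrow>
          emeasure (bessel_mu lam) {x\<in>{0<..}. \<bar>riesz_commutator lam bz f x\<bar> > t}
            \<le> ennreal (C / t * (\<integral>x. \<bar>f x\<bar> \<partial>bessel_mu lam))"
  then obtain C where HC: "\<And>f t. bdd_cpt_supp f \<Longrightarrow> t > 0 \<Longrightarrow>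
          emeasure (bessel_mu lam) {x\<in>{0<..}. \<bar>riesz_commutator lam bz f x\<bar> > t}
            \<le> ennreal (C / t * (\<integral>x. \<bar>f x\<bar> \<partial>bessel_mu lam))" by blast
  define f :: "real \<Rightarrow> real" where "f = indicator {1..2}"
  have bf: "bdd_cpt_supp f"
  proof -
    have "f \<in> borel_measurable borel" unfolding f_def by simp
    moreover have "\<forall>x. \<bar>f x\<bar> \<le> 1" unfolding f_def by (simp split: split_indicator)
    moreover have "\<forall>x. x \<notin> {1..2} \<longrightarrow> f x = 0" unfolding f_def by simp
    ultimately show ?thesis unfolding bdd_cpt_supp_def
      by (intro conjI exI[of _ "1::real"] exI[of _ "2::real"]) auto
  qed
  define m where "m = measure (bessel_mu lam) {1..2::real}"
  have m0: "0 < m" unfolding m_def by (rule mu_12_pos[OF lam])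
  have af: "(\<lambda>x. \<bar>f x\<bar>) = f" by (auto simp: f_def fun_eq_iff split: split_indicator)
  have intf: "(\<integral>x. \<bar>f x\<bar> \<partial>bessel_mu lam) = m"
    unfolding af unfolding f_def m_def using mu_12_fin[OF lam] mu_12_sets[of lam]
    by simp
  define \<kappa> where "\<kappa> = (2*lam/pi) * SS lam"
  have k0: "0 < \<kappa>" unfolding \<kappa>_def using lam SS_pos[OF lam] by simp
  define c1 where "c1 = 1 / (2 * 3 powr (2*lam+2))"
  have c10: "0 < c1" unfolding c1_def by simp
  define Z where "Z = 4 * exp (2 * \<bar>C\<bar> / (\<kappa> * c1))"
  have "0 \<le> 2 * \<bar>C\<bar> / (\<kappa> * c1)" using k0 c10 by simp
  then have Z4: "4 \<le> Z" unfolding Z_def by simp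
  define LBZ where "LBZ = (Z/2) / ((3*Z)\<^sup>2 powr (lam+1))"
  have LBZ0: "0 < LBZ" unfolding LBZ_def using Z4 by simp
  define Lz where "Lz = ln Z - ln 3"
  have Lz_eq: "Lz = ln (4/3) + 2 * \<bar>C\<bar> / (\<kappa> * c1)"
    unfolding Lz_def Z_def by (simp add: ln_mult ln_div)
  have Lz0: "0 < Lz" unfolding Lz_eq using k0 c10 by (intro add_pos_nonneg) auto
  define t where "t = \<kappa> * LBZ * Lz * m / 2"
  have t0: "0 < t" unfolding t_def using k0 LBZ0 Lz0 m0 by simp
  have sub: "{Z..2*Z} \<subseteq> {x\<in>{0<..}. \<bar>riesz_commutator lam bz f x\<bar> > t}"
  proof
    fix x assume x: "x \<in> {Z..2*Z}"
    then have x4: "4 \<le> x" using Z4 by auto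
    have "LBZ \<le> LB lam x" unfolding LBZ_def LB_def
    proof (rule frac_le)
      show "0 \<le> x/2" using x4 by simp
      show "Z/2 \<le> x/2" using x by simp
      show "0 < (3*x/2)\<^sup>2 powr (lam+1)" using x4 by simp
      show "(3*x/2)\<^sup>2 powr (lam+1) \<le> (3*Z)\<^sup>2 powr (lam+1)"
        using x x4 lam by (intro powr_mono2 power_mono) auto
    qed
    moreover have "Lz \<le> ln x - ln 3" unfolding Lz_def using x Z4 by simp
    ultimately have "\<kappa> * LBZ * Lz * m \<le> \<kappa> * LB lam x * (ln x - ln 3) * m"
      using k0 LBZ0 Lz0 m0 by (intro mult_right_mono mult_mono mult_left_mono) auto
    also have "\<dots> \<le> \<bar>riesz_commutator lam bz f x\<bar>"
      using comm_lower[OF lam x4] unfolding f_def \<kappa>_def m_def by (simp add: algebra_simps)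
    finally show "x \<in> {x\<in>{0<..}. \<bar>riesz_commutator lam bz f x\<bar> > t}"
      using t0 x4 unfolding t_def by auto
  qed
  have "ennreal (Z powr (2*lam)) * emeasure lborel {Z..2*Z} \<le> emeasure (bessel_mu lam) {Z..2*Z}"
    by (rule mu_em_lower) (use Z4 lam in \<open>auto intro!: powr_mono2\<close>)
  also have "\<dots> \<le> emeasure (bessel_mu lam) {x\<in>{0<..}. \<bar>riesz_commutator lam bz f x\<bar> > t}"
    by (rule emeasure_mono[OF sub]) (use level_meas[OF t0] in \<open>simp add: f_def\<close>)
  also have "\<dots> \<le> ennreal (C / t * m)" using HC[OF bf t0] intf by simp
  finally have E: "ennreal (Z powr (2*lam) * Z) \<le> ennreal (C / t * m)"
    using Z4 by (simp add: ennreal_mult)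
  have P: "0 < Z powr (2*lam) * Z" using Z4 by simp
  have I: "Z powr (2*lam) * Z \<le> C / t * m"
  proof (cases "0 \<le> C / t * m")
    case True then show ?thesis using E by (simp add: ennreal_le_iff)
  next
    case False then have "ennreal (C / t * m) = 0" by (simp add: ennreal_eq_0_iff)
    then show ?thesis using E P by simp
  qed
  have "Z powr (2*lam) * Z * t \<le> C * m" using I t0 by (simp add: field_simps)
  then have A: "\<kappa> * Lz * m / 2 * (LBZ * (Z powr (2*lam) * Z)) \<le> C * m" unfolding t_def
    by (simp add: algebra_simps)
  have id: "LBZ * (Z powr (2*lam) * Z) = c1" unfolding LBZ_def c1_def using Z4 by (intro c1_id) auto
  from A have "\<kappa> * Lz * m / 2 * c1 \<le> C * m" unfolding id .
  then have "(\<kappa> * Lz * c1 / 2) * m \<le> C * m" by (simp add: algebra_simps)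
  then have "\<kappa> * Lz * c1 / 2 \<le> C" using m0 by (rule mult_right_le_imp_le)
  moreover have "\<kappa> * c1 * (2 * \<bar>C\<bar> / (\<kappa> * c1)) = 2 * \<bar>C\<bar>" using k0 c10 by simp
  then have "\<kappa> * Lz * c1 / 2 > \<bar>C\<bar>" unfolding Lz_eq using k0 c10
    by (simp add: algebra_simps)
  ultimately show False by simp
qed



lemma si_const:
  assumes "A \<in> sets M" "emeasure M A < \<infinity>"
  shows "set_integrable M A (\<lambda>x. c::real)"
  unfolding set_integrable_def using assms
  by (intro integrable_scaleR_left) (simp add: integrable_indicator_iff Int_absorb2 sets.sets_into_space)

lemma osc:
  fixes f :: "'a \<Rightarrow> real"
  assumes A: "A \<in> sets M" "emeasure M A < \<infinity>" "0 < measure M A" and fi: "set_integrable M A f"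
  shows "(1/measure M A) * (LINT y:A|M. \<bar>f y - (1/measure M A) * (LINT y:A|M. f y)\<bar>)
          \<le> 2 * ((1/measure M A) * (LINT y:A|M. \<bar>f y - c\<bar>))"
proof -
  define m where "m = measure M A"
  define v where "v = (1/m) * (LINT y:A|M. f y)"
  define L where "L = (LINT y:A|M. \<bar>f y - c\<bar>)"
  have ic: "\<And>k::real. set_integrable M A (\<lambda>y. k)" by (rule si_const[OF A(1,2)])
  have i1: "set_integrable M A (\<lambda>y. \<bar>f y - v\<bar>)"
    by (intro set_integrable_abs set_integral_diff(1) fi ic)
  have i2: "set_integrable M A (\<lambda>y. \<bar>f y - c\<bar>)"
    by (intro set_integrable_abs set_integral_diff(1) fi ic)
  have s1: "(LINT y:A|M. \<bar>f y - v\<bar>) \<le> (LINT y:A|M. \<bar>f y - c\<bar> + \<bar>c - v\<bar>)"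
    by (rule set_integral_mono[OF i1 set_integral_add(1)[OF i2 ic]]) auto
  have s2: "(LINT y:A|M. \<bar>f y - c\<bar> + \<bar>c - v\<bar>) = L + m * \<bar>c - v\<bar>"
    unfolding L_def m_def using i2 ic set_integral_const[OF A(1), of "\<bar>c - v\<bar>"] A(2)
    by (simp add: set_integral_add(2))
  have "(LINT y:A|M. f y - c) = (LINT y:A|M. f y) - m * c"
    using set_integral_diff(2)[OF fi ic] set_integral_const[OF A(1), of c] A(2) by (simp add: m_def)
  then have e: "v - c = (1/m) * (LINT y:A|M. f y - c)"
    using A(3) unfolding v_def m_def by (simp add: field_simps)
  have "\<bar>LINT y:A|M. f y - c\<bar> \<le> L"
    using set_integral_norm_bound[OF set_integral_diff(1)[OF fi ic]] unfolding L_def by simp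
  moreover have "\<bar>c - v\<bar> = (1/m) * \<bar>LINT y:A|M. f y - c\<bar>"
    using A(3) unfolding abs_minus_commute[of c v] e m_def by (simp add: abs_mult)
  ultimately have s3: "\<bar>c - v\<bar> \<le> (1/m) * L" using A(3) unfolding m_def
    by (simp add: divide_right_mono)
  have "m * \<bar>c - v\<bar> \<le> L" using s3 A(3) unfolding m_def by (simp add: field_simps)
  then have "(LINT y:A|M. \<bar>f y - v\<bar>) \<le> 2 * L" using s1 s2 by linarith
  then have "(1/m) * (LINT y:A|M. \<bar>f y - v\<bar>) \<le> (1/m) * (2 * L)"
    using A(3) unfolding m_def by (intro mult_left_mono) auto
  then show ?thesis unfolding m_def v_def L_def by (simp add: algebra_simps)
qed



lemma b0_mono_diff:
  assumes "0 < a" "a \<le> y"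
  shows "0 \<le> bz y - bz a" "bz y - bz a \<le> ln y - ln a"
proof -
  show "0 \<le> bz y - bz a" using assms unfolding bz_def
    by (auto simp: max_def)
  show "bz y - bz a \<le> ln y - ln a"
  proof (cases "y \<le> 3")
    case True
    then have "bz y = 0" "bz a = 0" using assms unfolding bz_def by auto
    moreover have "ln a \<le> ln y" using assms by simp
    ultimately show ?thesis by simp
  next
    case F: False
    show ?thesis
    proof (cases "a \<le> 3")
      case True
      then have "ln 3 \<le> ln a + ln 3 - ln a" by simp
      have "ln a \<le> ln 3" using True assms by simp
      then show ?thesis using assms F True unfolding bz_def by (simp add: max_def ln_div)
    next
      case False then show ?thesis using assms F unfolding bz_def by (simp add: max_def ln_div)
    qed
  qed
qed

lemma mu_B_sets: "0 \<le> a \<Longrightarrow> {a<..<b} \<in> sets (bessel_mu lam)"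
  by (auto simp: mu_sets sets_restrict_space_iff)

lemma mu_B_fin: assumes "0 < lam" "0 \<le> a" shows "emeasure (bessel_mu lam) {a<..<b} < \<infinity>"
proof -
  have "emeasure (bessel_mu lam) {a<..<b} \<le> ennreal (b powr (2*lam)) * emeasure lborel {a<..<b}"
    by (rule mu_em_upper) (use assms in \<open>auto intro!: powr_mono2\<close>)
  also have "\<dots> < \<infinity>" by (cases "a \<le> b") (simp_all add: ennreal_mult_less_top)
  finally show ?thesis .
qed

lemma mu_B_fin': assumes "0 < lam" "0 \<le> a" shows "emeasure (bessel_mu lam) {a<..<b} \<noteq> top"
  using mu_B_fin[OF assms, of b] by simp

lemma mu_B_lower:
  assumes lam: "0 < lam" and a: "0 \<le> a" and a': "a \<le> a'" "0 < a'" "a' < b"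
  shows "a' powr (2*lam) * (b - a') \<le> measure (bessel_mu lam) {a<..<b}"
proof -
  have "ennreal (a' powr (2*lam)) * emeasure lborel {a'<..<b} \<le> emeasure (bessel_mu lam) {a'<..<b}"
    by (rule mu_em_lower) (use assms in \<open>auto intro!: powr_mono2\<close>)
  also have "\<dots> \<le> emeasure (bessel_mu lam) {a<..<b}"
    by (rule emeasure_mono) (use a' mu_B_sets[OF a] in auto)
  also have "\<dots> = ennreal (measure (bessel_mu lam) {a<..<b})"
    by (rule emeasure_eq_ennreal_measure[OF mu_B_fin'[OF lam a]])
  finally have "ennreal (a' powr (2*lam) * (b - a')) \<le> ennreal (measure (bessel_mu lam) {a<..<b})"
    using a' by (simp add: ennreal_mult)
  then show ?thesis by (simp add: ennreal_le_iff)
qed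

lemma b0_si:
  assumes lam: "0 < lam" and a: "0 \<le> a"
  shows "set_integrable (bessel_mu lam) {a<..<b} (\<lambda>y. \<bar>bz y - c\<bar>)" "set_integrable (bessel_mu lam) {a<..<b} bz"
proof -
  have ic: "set_integrable (bessel_mu lam) {a<..<b} (\<lambda>y. \<bar>bz b\<bar> + \<bar>c\<bar>)"
    by (rule si_const[OF mu_B_sets[OF a] mu_B_fin[OF lam a]])
  have bb: "\<And>y. y \<in> {a<..<b} \<Longrightarrow> \<bar>bz y\<bar> \<le> \<bar>bz b\<bar>"
  proof -
    fix y assume y: "y \<in> {a<..<b}"
    then have "0 < y" using a by auto
    then show "\<bar>bz y\<bar> \<le> \<bar>bz b\<bar>" using b0_mono_diff(1)[of y b] y by (simp add: bz_def)
  qed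
  have ae1: "AE x in bessel_mu lam. x \<in> {a<..<b} \<longrightarrow> norm (bz x) \<le> norm (\<bar>bz b\<bar> + \<bar>c\<bar>)"
  proof (rule AE_I2, rule impI)
    fix x assume "x \<in> {a<..<b}"
    then show "norm (bz x) \<le> norm (\<bar>bz b\<bar> + \<bar>c\<bar>)" using bb[of x] by simp
  qed
  have ae2: "AE x in bessel_mu lam. x \<in> {a<..<b} \<longrightarrow> norm (\<bar>bz x - c\<bar>) \<le> norm (\<bar>bz b\<bar> + \<bar>c\<bar>)"
  proof (rule AE_I2, rule impI)
    fix x assume "x \<in> {a<..<b}"
    then show "norm (\<bar>bz x - c\<bar>) \<le> norm (\<bar>bz b\<bar> + \<bar>c\<bar>)" using bb[of x] by simp
  qed
  show "set_integrable (bessel_mu lam) {a<..<b} bz"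
    by (rule set_integrable_bound[OF ic _ ae1])
       (auto simp: set_borel_measurable_def intro!: mu_meas)
  show "set_integrable (bessel_mu lam) {a<..<b} (\<lambda>y. \<bar>bz y - c\<bar>)"
    by (rule set_integrable_bound[OF ic _ ae2])
       (auto simp: set_borel_measurable_def intro!: mu_meas)
qed



lemma pt_bound:
  fixes y b lam :: real
  assumes lam: "0 < lam" and y: "0 < y" "y < b"
  shows "y powr (2*lam) * (ln b - ln y) \<le> b powr (2*lam) / lam"
proof -
  have b: "0 < b" using y by linarith
  have "ln b - ln y = ln (b/y)" using y b by (simp add: ln_div)
  also have "\<dots> \<le> (b/y) powr lam / lam" using y lam by (intro ln_powr_bound) auto
  finally have l: "ln b - ln y \<le> (b/y) powr lam / lam" .
  have "y powr (2*lam) * (ln b - ln y) \<le> y powr (2*lam) * ((b/y) powr lam / lam)"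
    using l by (intro mult_left_mono) auto
  also have "y powr (2*lam) * ((b/y) powr lam / lam) = y powr lam * b powr lam / lam"
  proof -
    have "y powr (2*lam) = y powr lam * y powr lam" by (simp add: powr_add[symmetric])
    moreover have "(b/y) powr lam = b powr lam / y powr lam" using y b by (simp add: powr_divide)
    ultimately show ?thesis using y by (simp add: field_simps)
  qed
  also have "\<dots> \<le> b powr lam * b powr lam / lam"
    using y lam by (intro divide_right_mono mult_right_mono powr_mono2) auto
  also have "b powr lam * b powr lam = b powr (2*lam)" by (simp add: powr_add[symmetric])
  finally show ?thesis .
qed

lemma osc_small:
  fixes a b :: real
  assumes lam: "0 < lam" and a: "0 < a" "a < b" "b \<le> 2*a"
  shows "(1/measure (bessel_mu lam) {a<..<b}) * (LINT y:{a<..<b}|bessel_mu lam. \<bar>bz y - bz a\<bar>) \<le> ln 2"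
proof -
  let ?M = "bessel_mu lam" let ?B = "{a<..<b}"
  have mp: "0 < measure ?M ?B"
  proof -
    have "((a+b)/2) powr (2*lam) * (b - (a+b)/2) \<le> measure ?M ?B"
      using a by (intro mu_B_lower[OF lam]) auto
    moreover have "0 < ((a+b)/2) powr (2*lam) * (b - (a+b)/2)" using a by simp
    ultimately show ?thesis by linarith
  qed
  have "(LINT y:?B|?M. \<bar>bz y - bz a\<bar>) \<le> (LINT y:?B|?M. ln (2::real))"
  proof (rule set_integral_mono)
    show "set_integrable ?M ?B (\<lambda>y. \<bar>bz y - bz a\<bar>)" using a by (intro b0_si[OF lam]) auto
    show "set_integrable ?M ?B (\<lambda>y. ln (2::real))" using a by (intro si_const mu_B_sets mu_B_fin[OF lam]) auto
    fix y assume y: "y \<in> ?B"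
    have "0 \<le> bz y - bz a" "bz y - bz a \<le> ln y - ln a" using b0_mono_diff[of a y] y a by auto
    moreover have "ln y \<le> ln (2*a)" using y a by auto
    moreover have "ln (2*a) = ln 2 + ln a" using a by (simp add: ln_mult)
    ultimately show "\<bar>bz y - bz a\<bar> \<le> ln 2" by linarith
  qed
  also have "\<dots> = measure ?M ?B * ln 2"
  proof -
    have "?B \<in> sets ?M" using a by (intro mu_B_sets) auto
    moreover have "emeasure ?M ?B \<noteq> \<infinity>" using mu_B_fin[OF lam, of a b] a by simp
    ultimately show ?thesis using set_integral_const[of ?B ?M "ln (2::real)"] by simp
  qed
  finally show ?thesis using mp by (simp add: field_simps)
qed



lemma osc_large:
  fixes a b lam :: real
  assumes lam: "0 < lam" and a: "0 \<le> a" "2*a < b"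
  shows "(1/measure (bessel_mu lam) {a<..<b}) * (LINT y:{a<..<b}|bessel_mu lam. \<bar>bz y - bz b\<bar>)
          \<le> 2 powr (2*lam+1) / lam"
proof -
  let ?M = "bessel_mu lam" let ?B = "{a<..<b}"
  have bz': "0 < b" using a by linarith
  define g where "g y = indicator ?B y * \<bar>bz y - bz b\<bar>" for y
  have gm[measurable]: "g \<in> borel_measurable borel" unfolding g_def by measurable
  have e1: "(LINT y:?B|?M. \<bar>bz y - bz b\<bar>) = (\<integral>y. g y \<partial>?M)"
    unfolding set_lebesgue_integral_def g_def by simp
  also have "\<dots> = (\<integral>y. indicator {0<..} y * (y powr (2*lam) * g y) \<partial>lborel)"
    by (rule mu_int[OF gm])
  also have "\<dots> \<le> (\<integral>y. indicator ?B y * (b powr (2*lam) / lam) \<partial>lborel)"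
  proof -
    have pt: "indicator {0<..} y * (y powr (2*lam) * g y) \<le> indicator ?B y * (b powr (2*lam) / lam)" for y
    proof (cases "y \<in> ?B")
      case True
      then have y: "0 < y" "y < b" using a by auto
      have "\<bar>bz y - bz b\<bar> \<le> ln b - ln y" using b0_mono_diff[of y b] y by auto
      then have "y powr (2*lam) * \<bar>bz y - bz b\<bar> \<le> y powr (2*lam) * (ln b - ln y)"
        by (intro mult_left_mono) auto
      also have "\<dots> \<le> b powr (2*lam) / lam" by (rule pt_bound[OF lam y])
      finally show ?thesis using True y by (simp add: g_def)
    qed (simp add: g_def)
    have nn: "0 \<le> indicator {0<..} y * (y powr (2*lam) * g y)" for y
      by (simp add: g_def)
    have ir: "integrable lborel (\<lambda>y. indicator ?B y * (b powr (2*lam) / lam))"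
      using a by (intro integrable_mult_left) (simp add: integrable_indicator_iff)
    show ?thesis
    proof (rule integral_mono[OF _ ir pt])
      show "integrable lborel (\<lambda>y. indicator {0<..} y * (y powr (2*lam) * g y))"
        by (rule Bochner_Integration.integrable_bound[OF ir]) (use pt nn lam in \<open>auto intro!: AE_I2\<close>)
    qed
  qed
  also have "\<dots> = (b - a) * (b powr (2*lam) / lam)" using a by simp
  finally have I: "(LINT y:?B|?M. \<bar>bz y - bz b\<bar>) \<le> (b - a) * (b powr (2*lam) / lam)" .
  have ml: "(b/2) powr (2*lam) * (b - b/2) \<le> measure ?M ?B"
    using a by (intro mu_B_lower[OF lam]) auto
  have mp: "0 < (b/2) powr (2*lam) * (b - b/2)" using bz' by simp
  have "(1/measure ?M ?B) * (LINT y:?B|?M. \<bar>bz y - bz b\<bar>) \<le> (1/measure ?M ?B) * ((b - a) * (b powr (2*lam) / lam))"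
    using I ml mp by (intro mult_left_mono) auto
  also have "\<dots> \<le> (1/((b/2) powr (2*lam) * (b - b/2))) * ((b - a) * (b powr (2*lam) / lam))"
  proof (rule mult_right_mono)
    have mpos: "0 < measure ?M ?B" using ml mp by linarith
    show "1 / measure ?M ?B \<le> 1 / ((b/2) powr (2*lam) * (b - b/2))"
      by (rule divide_left_mono[OF ml]) (use mp mpos in auto)
    show "0 \<le> (b - a) * (b powr (2*lam) / lam)" using a lam by auto
  qed
  also have "\<dots> \<le> (1/((b/2) powr (2*lam) * (b - b/2))) * (b * (b powr (2*lam) / lam))"
    using mp a lam bz' by (intro mult_left_mono mult_right_mono) auto
  also have "\<dots> = 2 powr (2*lam+1) / lam"
  proof -
    have "(b/2) powr (2*lam) = b powr (2*lam) / 2 powr (2*lam)" using bz' by (simp add: powr_divide)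
    moreover have "2 powr (2*lam+1) = 2 powr (2*lam) * 2" by (simp add: powr_add)
    moreover have "0 < b powr (2*lam)" "0 < (2::real) powr (2*lam)" using bz' by auto
    ultimately show ?thesis using bz' lam by (simp add: field_simps)
  qed
  finally show ?thesis .
qed



lemma mu_B_pos:
  fixes a b lam :: real
  assumes lam: "0 < lam" and a: "0 \<le> a" "a < b"
  shows "0 < measure (bessel_mu lam) {a<..<b}"
proof -
  have "((a+b)/2) powr (2*lam) * (b - (a+b)/2) \<le> measure (bessel_mu lam) {a<..<b}"
    using a by (intro mu_B_lower[OF lam]) auto
  moreover have "0 < ((a+b)/2) powr (2*lam) * (b - (a+b)/2)" using a by simp
  ultimately show ?thesis by linarith
qed

lemma bmo: assumes lam: "0 < lam" shows "BMO_bessel lam bz"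
  unfolding BMO_bessel_def
proof (intro conjI allI impI)
  show "bz \<in> borel_measurable (bessel_mu lam)" by (rule mu_meas[OF b0_meas])
  fix a b :: real assume ab: "0 \<le> a \<and> a < b"
  then show "set_integrable (bessel_mu lam) {a<..<b} bz" by (intro b0_si(2)[OF lam]) auto
next
  show "\<exists>C. \<forall>a b. 0 \<le> a \<and> a < b \<longrightarrow>
        (1 / measure (bessel_mu lam) {a<..<b}) *
          (\<integral>y\<in>{a<..<b}. \<bar>bz y - bessel_avg lam bz a b\<bar> \<partial>bessel_mu lam) \<le> C"
  proof (intro exI allI impI)
    fix a b :: real assume ab: "0 \<le> a \<and> a < b"
    let ?M = "bessel_mu lam" let ?B = "{a<..<b}"
    have osc': "(1/measure ?M ?B) * (LINT y:?B|?M. \<bar>bz y - bessel_avg lam bz a b\<bar>)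
          \<le> 2 * ((1/measure ?M ?B) * (LINT y:?B|?M. \<bar>bz y - c\<bar>))" for c
      unfolding bessel_avg_def
      by (rule osc) (use ab mu_B_sets mu_B_fin[OF lam] mu_B_pos[OF lam] b0_si(2)[OF lam] in auto)
    show "(1/measure ?M ?B) * (LINT y:?B|?M. \<bar>bz y - bessel_avg lam bz a b\<bar>)
          \<le> 2 * max (ln 2) (2 powr (2*lam+1) / lam)"
    proof (cases "b \<le> 2*a")
      case True
      then have "0 < a" using ab by linarith
      then have "(1/measure ?M ?B) * (LINT y:?B|?M. \<bar>bz y - bz a\<bar>) \<le> ln 2"
        using ab True by (intro osc_small[OF lam]) auto
      then show ?thesis using osc'[of "bz a"] by linarith
    next
      case False
      then have "(1/measure ?M ?B) * (LINT y:?B|?M. \<bar>bz y - bz b\<bar>) \<le> 2 powr (2*lam+1) / lam"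
        using ab by (intro osc_large[OF lam]) auto
      then show ?thesis using osc'[of "bz b"] by linarith
    qed
  qed
qed

theorem theorem1p13:
  fixes lam :: real
  assumes "lam > 0"
  shows "\<exists>b0. BMO_bessel lam b0 \<and>
    \<not> (\<exists>C. \<forall>f t. bdd_cpt_supp f \<longrightarrow> t > 0 \<longrightarrow>
          emeasure (bessel_mu lam) {x\<in>{0<..}. \<bar>riesz_commutator lam b0 f x\<bar> > t}
            \<le> ennreal (C / t * (\<integral>x. \<bar>f x\<bar> \<partial>bessel_mu lam)))"
  using bmo[OF assms] not_weak[OF assms] by blast

end
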